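(* Let $k\ge3$ be odd, $0\le p\le p_k^\star$ and $\eta>0$. There exists $\varepsilon'=\varepsilon'(p,k,\eta)>0$ such that for every finite graph $G=(V,E)$ without isolated vertices, every round $t$, every configuration $\bar{\mathbf x}$ with $\phi^{(t)}_{\max}\le\varphi^-_{p,k}-\eta$, and every $u\in V$, under the $(k,p,\mathcal B)$-Edge-Majority dynamics, $$\mathbb E\big[\phi_u^{(t+1)}\mid\mathbf X^{(t)}=\bar{\mathbf x}\big]\le(1-\varepsilon')\,\phi^{(t)}_{\max}.$$
   Context: $N(u)$ neighbourhood of $u$, $\delta_u=|N(u)|$. States in $\{\mathcal R,\mathcal B\}$; $\mathbf X^{(t)}$ is the configuration at round $t$, $R^{(t)}$ the $\mathcal R$ nodes, $\phi_u^{(t)}=|N(u)\cap R^{(t)}|/\delta_u$, $\phi^{(t)}_{\max}=\max_u\phi_u^{(t)}$. $(k,p,\mathcal B)$-Edge-Majority: in each round every node $u$ independently samples $k$ neighbours uniformly with replacement; for each sampled $v$, independently, $u$ sees $v$ as $\mathcal B$ with probability $p$ and otherwise sees $v$'s true current state; $u$'s next state is the state seen more often. $F_{p,k}(x)=\Pr[\mathrm{Bin}(k,(1-p)x)\ge(k+1)/2]$. $p_k^\star\in[1/9,1/2)$ is the (unique) value such that for $0\le p<p_k^\star$, $F_{p,k}(x)=x$ on $[0,1]$ has exactly three solutions $0<\varphi^-_{p,k}<\varphi^+_{p,k}$; for $p=p_k^\star$ exactly two, $0$ and $\varphi_{p,k}$, and then $\varphi^-_{p,k}:=\varphi_{p,k}$;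 for $p>p_k^\star$ only $0$. *)

theory Defs
  imports "HOL-Probability.Probability"
begin

text \<open>Graph: finite vertex set V, symmetric irreflexive adjacency relation E.
  Configurations: functions 'a => bool, True = state R, False = state B.\<close>

definition nbhd :: "'a set \<Rightarrow> ('a \<Rightarrow> 'a \<Rightarrow> bool) \<Rightarrow> 'a \<Rightarrow> 'a set" where
  "nbhd V E u = {v \<in> V. E u v}"

definition simple_graph :: "'a set \<Rightarrow> ('a \<Rightarrow> 'a \<Rightarrow> bool) \<Rightarrow> bool" where
  "simple_graph V E \<longleftrightarrow> finite V \<and> (\<forall>u v. E u v \<longrightarrow> E v u) \<and> (\<forall>u. \<not> E u u)"

definition no_isolated :: "'a set \<Rightarrow> ('a \<Rightarrow> 'a \<Rightarrow> bool) \<Rightarrow> bool" where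
  "no_isolated V E \<longleftrightarrow> (\<forall>u\<in>V. nbhd V E u \<noteq> {})"

definition phi :: "'a set \<Rightarrow> ('a \<Rightarrow> 'a \<Rightarrow> bool) \<Rightarrow> ('a \<Rightarrow> bool) \<Rightarrow> 'a \<Rightarrow> real" where
  "phi V E x u = real (card {v \<in> nbhd V E u. x v}) / real (card (nbhd V E u))"

definition phi_max :: "'a set \<Rightarrow> ('a \<Rightarrow> 'a \<Rightarrow> bool) \<Rightarrow> ('a \<Rightarrow> bool) \<Rightarrow> real" where
  "phi_max V E x = Max ((\<lambda>u. phi V E x u) ` V)"

primrec seen_R :: "'a set \<Rightarrow> ('a \<Rightarrow> 'a \<Rightarrow> bool) \<Rightarrow> real \<Rightarrow> ('a \<Rightarrow> bool) \<Rightarrow> 'a \<Rightarrow> nat \<Rightarrow> nat pmf" where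
  "seen_R V E p x u 0 = return_pmf 0"
| "seen_R V E p x u (Suc n) =
     do { c \<leftarrow> seen_R V E p x u n;
          v \<leftarrow> pmf_of_set (nbhd V E u);
          noisy \<leftarrow> bernoulli_pmf p;
          return_pmf (if \<not> noisy \<and> x v then Suc c else c) }"

definition node_update :: "'a set \<Rightarrow> ('a \<Rightarrow> 'a \<Rightarrow> bool) \<Rightarrow> nat \<Rightarrow> real \<Rightarrow> ('a \<Rightarrow> bool) \<Rightarrow> 'a \<Rightarrow> bool pmf" where
  "node_update V E k p x u = map_pmf (\<lambda>c. k - c < c) (seen_R V E p x u k)"

definition edge_majority_step :: "'a set \<Rightarrow> ('a \<Rightarrow> 'a \<Rightarrow> bool) \<Rightarrow> nat \<Rightarrow> real \<Rightarrow> ('a \<Rightarrow> bool) \<Rightarrow> ('a \<Rightarrow> bool) pmf" where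
  "edge_majority_step V E k p x = Pi_pmf V False (node_update V E k p x)"

definition F :: "real \<Rightarrow> nat \<Rightarrow> real \<Rightarrow> real" where
  "F p k x = (let q = (1 - p) * x in
     \<Sum>m\<in>{m. m \<le> k \<and> real m \<ge> (real k + 1) / 2}. real (k choose m) * q ^ m * (1 - q) ^ (k - m))"

definition fixpts :: "real \<Rightarrow> nat \<Rightarrow> real set" where
  "fixpts p k = {x \<in> {0..1}. F p k x = x}"

definition p_star :: "nat \<Rightarrow> real" where
  "p_star k = (THE p. 1/9 \<le> p \<and> p < 1/2
      \<and> (\<forall>q. 0 \<le> q \<and> q < p \<longrightarrow> card (fixpts q k) = 3)
      \<and> card (fixpts p k) = 2
      \<and> (\<forall>q. p < q \<and> q \<le> 1 \<longrightarrow> fixpts q k = {0}))"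

definition phi_minus :: "real \<Rightarrow> nat \<Rightarrow> real" where
  "phi_minus p k = Min (fixpts p k - {0})"

end

theory Submission imports Defs "HOL-Computational_Algebra.Polynomial" begin

interpretation pmf_as_function .

lemma bern_clamp: "bernoulli_pmf p = bernoulli_pmf (min 1 (max 0 p))"
  by transfer auto

lemma inner_bern:
  assumes "finite N" "N \<noteq> {}" "0 \<le> p" "p \<le> 1"
  shows "pmf_of_set N \<bind> (\<lambda>v. bernoulli_pmf p \<bind> (\<lambda>noisy. return_pmf (\<not> noisy \<and> x v)))
       = bernoulli_pmf ((1 - p) * (real (card {v\<in>N. x v}) / real (card N)))"
proof -
  have c: "card {v\<in>N. x v} \<le> card N" using assms by (intro card_mono) auto
  have cp: "card N > 0" using assms by auto
  have q0: "0 \<le> (1 - p) * (real (card {v\<in>N. x v}) / real (card N))" using assms by simp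
  have q1: "(1 - p) * (real (card {v\<in>N. x v}) / real (card N)) \<le> 1"
  proof -
    have "real (card {v\<in>N. x v}) / real (card N) \<le> 1" using c cp by simp
    moreover have "real (card {v\<in>N. x v}) / real (card N) \<ge> 0" by simp
    ultimately show ?thesis using assms by (intro mult_le_one) auto
  qed
  have T: "pmf (pmf_of_set N \<bind> (\<lambda>v. bernoulli_pmf p \<bind> (\<lambda>noisy. return_pmf (\<not> noisy \<and> x v)))) True
     = (1 - p) * (real (card {v\<in>N. x v}) / real (card N))"
  proof -
    have i: "pmf (bernoulli_pmf p \<bind> (\<lambda>noisy. return_pmf (\<not> noisy \<and> x v))) True = (if x v then 1 - p else 0)" for v
      using assms by (simp add: pmf_bind indicator_def)
    have "(\<Sum>v\<in>N. (if x v then 1 - p else 0)) = (1 - p) * real (card {v\<in>N. x v})"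
      using assms(1) by (simp add: sum.If_cases Int_def)
    then show ?thesis using assms by (simp add: pmf_bind_pmf_of_set i)
  qed
  show ?thesis
  proof (rule pmf_eqI)
    fix b show "pmf (pmf_of_set N \<bind> (\<lambda>v. bernoulli_pmf p \<bind> (\<lambda>noisy. return_pmf (\<not> noisy \<and> x v)))) b =
      pmf (bernoulli_pmf ((1 - p) * (real (card {v\<in>N. x v}) / real (card N)))) b"
      by (cases b) (use T q0 q1 in \<open>simp_all add: pmf_False_conv_True[of _] \<close>)
  qed
qed

lemma phi_range:
  assumes "finite V" 
  shows "0 \<le> phi V E x u \<and> phi V E x u \<le> 1"
proof -
  have "finite (nbhd V E u)" using assms by (simp add: nbhd_def)
  then have "card {v \<in> nbhd V E u. x v} \<le> card (nbhd V E u)" by (intro card_mono) auto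
  then show ?thesis unfolding phi_def by (cases "card (nbhd V E u) = 0") auto
qed

lemma seen_R_binomial:
  assumes "finite V" "nbhd V E u \<noteq> {}" "0 \<le> p" "p \<le> 1"
  shows "seen_R V E p x u n = binomial_pmf n ((1 - p) * phi V E x u)"
proof (induction n)
  case 0
  have "(1 - p) * phi V E x u \<in> {0..1}" using phi_range[OF assms(1)] assms by (auto intro: mult_le_one)
  then show ?case by (simp add: binomial_pmf_0)
next
  case (Suc n)
  define q where "q = (1 - p) * phi V E x u"
  have q: "q \<in> {0..1}" using phi_range[OF assms(1)] assms by (auto intro: mult_le_one simp: q_def)
  have fin: "finite (nbhd V E u)" using assms by (simp add: nbhd_def)
  have "seen_R V E p x u (Suc n) = seen_R V E p x u n \<bind> (\<lambda>c. map_pmf (\<lambda>b. if b then Suc c else c)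
      (pmf_of_set (nbhd V E u) \<bind> (\<lambda>v. bernoulli_pmf p \<bind> (\<lambda>noisy. return_pmf (\<not> noisy \<and> x v)))))"
    by (simp add: map_bind_pmf map_return_pmf if_distrib)
  also have "\<dots> = binomial_pmf n q \<bind> (\<lambda>c. map_pmf (\<lambda>b. if b then Suc c else c) (bernoulli_pmf q))"
    by (simp add: Suc inner_bern[OF fin assms(2-4)] q_def phi_def)
  also have "\<dots> = binomial_pmf (Suc n) q"
    using q by (simp add: binomial_pmf_Suc map_pmf_def bind_commute_pmf[of "bernoulli_pmf q"] if_distrib, intro bind_pmf_cong refl, auto)
  finally show ?case by (simp add: q_def)
qed


definition G :: "nat \<Rightarrow> real \<Rightarrow> real" where
  "G k q = (\<Sum>c\<le>k. (if k - c < c then real (k choose c) * q ^ c * (1 - q) ^ (k - c) else 0))"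

lemma exp_node_update:
  assumes "finite V" "nbhd V E v \<noteq> {}" "0 \<le> p" "p \<le> 1"
  shows "measure_pmf.expectation (node_update V E k p x v) (\<lambda>b. of_bool b) = G k ((1 - p) * phi V E x v)"
proof -
  have q: "(1 - p) * phi V E x v \<in> {0..1}" using phi_range[OF assms(1)] assms by (auto intro: mult_le_one)
  show ?thesis
    unfolding node_update_def seen_R_binomial[OF assms] integral_map_pmf
    unfolding expectation_binomial_pmf'[OF q] G_def by (intro sum.cong refl) simp
qed

lemma exp_step:
  assumes "simple_graph V E" "no_isolated V E" "u \<in> V" "0 \<le> p" "p \<le> 1"
  shows "measure_pmf.expectation (edge_majority_step V E k p x) (\<lambda>y. phi V E y u)
    = (\<Sum>v\<in>nbhd V E u. G k ((1 - p) * phi V E x v)) / real (card (nbhd V E u))"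
proof -
  have finV: "finite V" using assms by (simp add: simple_graph_def)
  define N where "N = nbhd V E u"
  have finN: "finite N" using finV by (simp add: N_def nbhd_def)
  have NV: "N \<subseteq> V" by (auto simp: N_def nbhd_def)
  have ph: "phi V E y u = (\<Sum>v\<in>N. of_bool (y v)) / real (card N)" for y
  proof -
    have "real (card {v\<in>N. y v}) = (\<Sum>v\<in>N. of_bool (y v))"
      using finN by (simp add: of_bool_def sum.If_cases Int_def)
    then show ?thesis by (simp add: phi_def N_def)
  qed
  have integ: "integrable (measure_pmf M) (\<lambda>y. of_bool (y v) :: real)" for M :: "('a \<Rightarrow> bool) pmf" and v
    by (intro measure_pmf.integrable_const_bound[of _ 1]) auto
  have comp: "measure_pmf.expectation (edge_majority_step V E k p x) (\<lambda>y. of_bool (y v) :: real)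
      = G k ((1 - p) * phi V E x v)" if "v \<in> N" for v
  proof -
    have vV: "v \<in> V" using that NV by auto
    have nv: "nbhd V E v \<noteq> {}" using assms(2) vV by (simp add: no_isolated_def)
    have "measure_pmf.expectation (edge_majority_step V E k p x) (\<lambda>y. of_bool (y v) :: real)
       = measure_pmf.expectation (map_pmf (\<lambda>f. f v) (edge_majority_step V E k p x)) (\<lambda>b. of_bool b)"
      by simp
    also have "\<dots> = measure_pmf.expectation (node_update V E k p x v) (\<lambda>b. of_bool b)"
      unfolding edge_majority_step_def by (subst Pi_pmf_component[OF finV]) (simp add: vV)
    also have "\<dots> = G k ((1 - p) * phi V E x v)" by (rule exp_node_update[OF finV nv assms(4,5)])
    finally show ?thesis .
  qed
  have "measure_pmf.expectation (edge_majority_step V E k p x) (\<lambda>y. phi V E y u)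
      = measure_pmf.expectation (edge_majority_step V E k p x) (\<lambda>y. (\<Sum>v\<in>N. of_bool (y v)) / real (card N))"
    by (simp add: ph)
  also have "\<dots> = (\<Sum>v\<in>N. measure_pmf.expectation (edge_majority_step V E k p x) (\<lambda>y. of_bool (y v) :: real)) / real (card N)"
    using integ by simp
  also have "\<dots> = (\<Sum>v\<in>N. G k ((1 - p) * phi V E x v)) / real (card N)"
    by (simp add: comp)
  finally show ?thesis by (simp add: N_def)
qed


lemma seen_R_clamp: "seen_R V E p x u n = seen_R V E (min 1 (max 0 p)) x u n"
  by (induction n) (simp_all add: bern_clamp[of p, symmetric])

lemma step_clamp: "edge_majority_step V E k p x = edge_majority_step V E k (min 1 (max 0 p)) x"
  unfolding edge_majority_step_def node_update_def seen_R_clamp[of V E p] ..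

lemma G_zero: "k \<ge> 1 \<Longrightarrow> G k 0 = 0"
  unfolding G_def by (intro sum.neutral) auto

definition Hp :: "nat \<Rightarrow> real \<Rightarrow> real poly" where
  "Hp k a = (\<Sum>c\<le>k. if k - c < c then smult (real (k choose c) * a ^ c) (monom 1 (c - 1) * [:1, -a:] ^ (k - c)) else 0)"

lemma poly_Hp: "poly (Hp k a) y = (\<Sum>c\<le>k. if k - c < c then real (k choose c) * a ^ c * y ^ (c - 1) * (1 - a * y) ^ (k - c) else 0)"
  unfolding Hp_def poly_sum by (intro sum.cong refl) (simp add: poly_monom algebra_simps)

lemma G_Hp: "G k (a * y) = y * poly (Hp k a) y"
  unfolding G_def poly_Hp sum_distrib_left
proof (intro sum.cong refl)
  fix c assume "c \<in> {..k}"
  show "(if k - c < c then real (k choose c) * (a * y) ^ c * (1 - a * y) ^ (k - c) else 0) =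
        y * (if k - c < c then real (k choose c) * a ^ c * y ^ (c - 1) * (1 - a * y) ^ (k - c) else 0)"
  proof (cases "k - c < c")
    case True
    then have "c = Suc (c - 1)" by simp
    then have "y ^ c = y * y ^ (c - 1)" by (metis power_Suc)
    then show ?thesis using True by (simp add: power_mult_distrib)
  qed simp
qed

lemma Hp_zero: "k \<ge> 3 \<Longrightarrow> poly (Hp k a) 0 = 0"
  unfolding poly_Hp by (intro sum.neutral) auto

lemma F_G: "F p k y = G k ((1 - p) * y)"
proof -
  have e: "{m. m \<le> k \<and> real m \<ge> (real k + 1) / 2} = {m \<in> {..k}. k - m < m}" by auto
  show ?thesis unfolding F_def G_def Let_def e sum.inter_filter[OF finite_atMost] ..
qed


lemma eps_exists:
  fixes H :: "real \<Rightarrow> real"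
  assumes "continuous_on {0..c} H" "\<forall>x\<in>{0..c}. H x < 1" "H 0 = 0"
  shows "\<exists>\<epsilon>>0. \<epsilon> \<le> 1 \<and> (\<forall>x\<in>{0..c}. H x \<le> 1 - \<epsilon>)"
proof (cases "c < 0")
  case True
  then show ?thesis by (intro exI[of _ 1]) auto
next
  case False
  then obtain x0 where x0: "x0 \<in> {0..c}" "\<forall>y\<in>{0..c}. H y \<le> H x0"
    using continuous_attains_sup[OF compact_Icc _ assms(1)] by fastforce
  have "H 0 \<le> H x0" using x0 False by auto
  then show ?thesis using x0 assms(2) by (intro exI[of _ "1 - H x0"]) (auto simp: assms(3))
qed

lemma phi_max_props:
  assumes "finite V" "u \<in> V"
  shows "0 \<le> phi_max V E x" "phi_max V E x \<le> 1" "\<And>v. v \<in> V \<Longrightarrow> phi V E x v \<le> phi_max V E x"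
proof -
  have fin: "finite ((\<lambda>u. phi V E x u) ` V)" using assms by simp
  show le: "\<And>v. v \<in> V \<Longrightarrow> phi V E x v \<le> phi_max V E x"
    unfolding phi_max_def using fin by (intro Max_ge) auto
  show "0 \<le> phi_max V E x" using le[OF assms(2)] phi_range[OF assms(1), of E x u] by linarith
  show "phi_max V E x \<le> 1" unfolding phi_max_def using fin assms phi_range[OF assms(1)]
    by (subst Max_le_iff) auto
qed

theorem lemma5p13:
  fixes k :: nat and p \<eta> :: real
  assumes "odd k" and "k \<ge> 3" and "0 \<le> p" and "p \<le> p_star k" and "\<eta> > 0"
  shows "\<exists>\<epsilon>>0. \<forall>(V :: 'a set) E x u.
           simple_graph V E \<and> no_isolated V E \<and>
           phi_max V E x \<le> phi_minus p k - \<eta> \<and> u \<in> V \<longrightarrow>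
           measure_pmf.expectation (edge_majority_step V E k p x) (\<lambda>y. phi V E y u)
             \<le> (1 - \<epsilon>) * phi_max V E x"
proof (cases "p \<le> 1")
  case False
  show ?thesis
  proof (intro exI[of _ "1/2"] conjI allI impI)
    fix V :: "'a set" and E x u
    assume h: "simple_graph V E \<and> no_isolated V E \<and> phi_max V E x \<le> phi_minus p k - \<eta> \<and> u \<in> V"
    have finV: "finite V" using h by (simp add: simple_graph_def)
    have mm: "min 1 (max 0 p) = 1" using False by simp
    have "measure_pmf.expectation (edge_majority_step V E k p x) (\<lambda>y. phi V E y u) = 0"
      unfolding step_clamp[of V E k p] mm using h assms(2)
      by (subst exp_step) (auto simp: G_zero)
    then show "measure_pmf.expectation (edge_majority_step V E k p x) (\<lambda>y. phi V E y u)
             \<le> (1 - 1/2) * phi_max V E x" using phi_max_props(1)[OF finV, of u E x] h by simp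
  qed simp
next
  case True
  define a where "a = 1 - p"
  define P where "P = Hp k a"
  define S where "S = fixpts p k - {0}"
  have FP: "F p k y = y * poly P y" for y unfolding F_G P_def a_def G_Hp ..
  have P0: "poly P 0 = 0" unfolding P_def using Hp_zero assms(2) by simp
  have "P - 1 \<noteq> 0"
  proof
    assume "P - 1 = 0"
    then have "poly (P - 1) 0 = 0" by simp
    then show False using P0 by simp
  qed
  then have fr: "finite {y. poly (P - 1) y = 0}" by (rule poly_roots_finite)
  have SP: "y \<in> S \<Longrightarrow> poly P y = 1" for y
    unfolding S_def fixpts_def using FP[of y] by auto
  have finS: "finite S" by (rule finite_subset[OF _ fr]) (auto dest: SP)
  define c0 where "c0 = (if S = {} then 1 else min 1 (Min S - \<eta>))"
  have noroot: "poly P y \<noteq> 1" if "0 < y" "y \<le> c0" for y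
  proof
    assume "poly P y = 1"
    then have "y \<in> S" using that FP[of y] unfolding S_def fixpts_def c0_def by (auto split: if_splits)
    then have "Min S \<le> y" "S \<noteq> {}" using finS by auto
    then show False using that assms(5) unfolding c0_def by auto
  qed
  have cont: "continuous_on A (poly P)" for A by (intro continuous_intros)
  have less1: "\<forall>y\<in>{0..c0}. poly P y < 1"
  proof
    fix y assume y: "y \<in> {0..c0}"
    show "poly P y < 1"
    proof (rule ccontr)
      assume "\<not> poly P y < 1"
      then obtain z where z: "0 \<le> z" "z \<le> y" "poly P z = 1"
        using IVT'[of "poly P" 0 1 y] P0 y cont by auto
      then have "z \<noteq> 0" using P0 by auto
      then show False using noroot[of z] z y by auto
    qed
  qed
  obtain \<epsilon> where eps: "\<epsilon> > 0" "\<epsilon> \<le> 1" "\<forall>y\<in>{0..c0}. poly P y \<le> 1 - \<epsilon>"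
    using eps_exists[OF cont less1 P0] by blast
  show ?thesis
  proof (intro exI[of _ \<epsilon>] conjI allI impI)
    show "\<epsilon> > 0" by fact
    fix V :: "'a set" and E x u
    assume h: "simple_graph V E \<and> no_isolated V E \<and> phi_max V E x \<le> phi_minus p k - \<eta> \<and> u \<in> V"
    have finV: "finite V" using h by (simp add: simple_graph_def)
    have uV: "u \<in> V" using h by simp
    define N where "N = nbhd V E u"
    have NV: "N \<subseteq> V" by (auto simp: N_def nbhd_def)
    have finN: "finite N" using finV NV finite_subset by blast
    have Nne: "N \<noteq> {}" using h by (simp add: no_isolated_def N_def)
    have pmc: "phi_max V E x \<le> c0"
    proof (cases "S = {}")
      case True then show ?thesis using phi_max_props(2)[OF finV uV] by (simp add: c0_def)
    next
      case False
      have "phi_minus p k = Min S" by (simp add: phi_minus_def S_def)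
      then show ?thesis using phi_max_props(2)[OF finV uV] h False by (simp add: c0_def)
    qed
    have mm: "min 1 (max 0 p) = p" using True assms(3) by simp
    have E: "measure_pmf.expectation (edge_majority_step V E k p x) (\<lambda>y. phi V E y u)
      = (\<Sum>v\<in>N. phi V E x v * poly P (phi V E x v)) / real (card N)"
      using exp_step[of V E u p k x] h True assms(3) unfolding N_def P_def a_def G_Hp by simp
    have trm: "phi V E x v * poly P (phi V E x v) \<le> (1 - \<epsilon>) * phi_max V E x" if "v \<in> N" for v
    proof -
      have vV: "v \<in> V" using that NV by auto
      have r: "0 \<le> phi V E x v" "phi V E x v \<le> phi_max V E x"
        using phi_range[OF finV] phi_max_props(3)[OF finV uV vV] by auto
      then have "poly P (phi V E x v) \<le> 1 - \<epsilon>" using eps(3) pmc by auto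
      then have "phi V E x v * poly P (phi V E x v) \<le> phi V E x v * (1 - \<epsilon>)"
        using r(1) by (intro mult_left_mono)
      also have "\<dots> \<le> phi_max V E x * (1 - \<epsilon>)" using r eps(2) by (intro mult_right_mono) auto
      finally show ?thesis by (simp add: mult.commute)
    qed
    have "(\<Sum>v\<in>N. phi V E x v * poly P (phi V E x v)) \<le> real (card N) * ((1 - \<epsilon>) * phi_max V E x)"
      using sum_bounded_above[of N _ "(1 - \<epsilon>) * phi_max V E x"] trm by auto
    then show "measure_pmf.expectation (edge_majority_step V E k p x) (\<lambda>y. phi V E y u)
             \<le> (1 - \<epsilon>) * phi_max V E x"
      unfolding E using finN Nne by (simp add: divide_le_eq mult.commute)
  qed
qed

end
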